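(* Let $a,b\in(0,1]$ and $F(x)=F(a,b;a+b;x)$ for $|x|<1$. Then $1/F(x)$ is concave on $(0,1)$. In particular, $$F\Big(\frac{x+y}{2}\Big)\le\frac{2F(x)F(y)}{F(x)+F(y)}$$ for all $x,y\in(0,1)$, with equality if and only if $x=y$.
   Context: $F(a,b;c;x)=\sum_{n=0}^\infty\frac{(a,n)(b,n)}{(c,n)\,n!}x^n$ for $|x|<1$ is the Gaussian hypergeometric function, where $(a,0)=1$ and $(a,n)=a(a+1)\cdots(a+n-1)$ for $n\ge1$. *)

theory Defs
  imports "HOL-Analysis.Analysis"
begin

definition hyp2f1 :: "real \<Rightarrow> real \<Rightarrow> real \<Rightarrow> real \<Rightarrow> real" where
  "hyp2f1 a b c x = (\<Sum>n. pochhammer a n * pochhammer b n / (pochhammer c n * fact n) * x ^ n)"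

end

theory Submission
  imports Defs "HOL-Analysis.Analysis"
begin

lemma beta_shift:
  fixes a b :: real assumes "0 < a" "0 < b"
  shows "Beta (b + real n) a = Beta b a * (pochhammer b n / pochhammer (a+b) n)"
proof -
  have nb: "b \<notin> \<int>\<^sub>\<le>\<^sub>0" using assms by (auto elim!: nonpos_Ints_cases)
  have nab: "a + b \<notin> \<int>\<^sub>\<le>\<^sub>0" using assms by (auto elim!: nonpos_Ints_cases)
  have g1: "Gamma b > 0" "Gamma a > 0" "Gamma (a+b) > 0" "Gamma (b + real n) > 0" "Gamma (b + real n + a) > 0"
    using assms by (auto intro!: Gamma_real_pos)
  have "pochhammer b n = Gamma (b + real n) / Gamma b" using pochhammer_Gamma[OF nb] by simp
  moreover have "pochhammer (a+b) n = Gamma (a + b + real n) / Gamma (a+b)" using pochhammer_Gamma[OF nab] by simp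
  ultimately show ?thesis using g1 unfolding Beta_def by (simp add: field_simps add_ac)
qed

lemma gbin_poch: "((- a) gchoose n) * (- u) ^ n = pochhammer (a::real) n / fact n * u ^ n"
  by (simp add: gbinomial_pochhammer power_mult_distrib[symmetric] flip: power_minus)

lemma powr_concave_ineq:
  fixes a u v m n :: real
  assumes "0 < a" "a \<le> 1" "0 < u" "0 < v" "0 \<le> m" "0 \<le> n" "m + n = 1"
  shows "m * u powr a + n * v powr a \<le> (m * u + n * v) powr a"
proof -
  have c: "convex_on {0<..} (\<lambda>x. x powr (1/a))" using assms by (intro powr_convex) simp
  have mn: "m = 1 - n" using assms by simp
  have "(m * u powr a + n * v powr a) powr (1/a) \<le> m * (u powr a) powr (1/a) + n * (v powr a) powr (1/a)"
    unfolding mn using convex_onD[OF c, of n "u powr a" "v powr a"] assms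
    by (simp add: convex_on_def)
  have e: "m * (u powr a) powr (1/a) + n * (v powr a) powr (1/a) = m * u + n * v"
    using assms by (simp add: powr_powr)
  have pos: "0 < m * u powr a + n * v powr a"
  proof -
    have "0 \<le> m * u powr a" "0 \<le> n * v powr a" using assms by auto
    moreover have "m > 0 \<or> n > 0" using assms by linarith
    ultimately show ?thesis using assms by (auto simp: add_pos_nonneg add_nonneg_pos)
  qed
  have "((m * u powr a + n * v powr a) powr (1/a)) powr a \<le> (m * u + n * v) powr a"
    using `(m * u powr a + n * v powr a) powr (1/a) \<le> _` e assms pos
    by (intro powr_mono2) auto
  thus ?thesis using assms pos by (simp add: powr_powr)
qed

definition wB :: "real \<Rightarrow> real \<Rightarrow> real \<Rightarrow> real" where
  "wB a b t = t powr (b - 1) * (1 - t) powr (a - 1)"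

lemma Beta_pos: "0 < a \<Longrightarrow> 0 < b \<Longrightarrow> Beta a (b::real) > 0"
  unfolding Beta_def by (auto intro!: Gamma_real_pos divide_pos_pos mult_pos_pos)

lemma wB_nonneg: "wB a b t \<ge> 0"
  unfolding wB_def by simp

lemma rep:
  fixes a b z :: real
  assumes a: "0 < a" and b: "0 < b" and z: "0 \<le> z" "z < 1"
  shows "(\<lambda>t. wB a b t * (1 - z*t) powr (-a)) integrable_on {0..1}"
    and "hyp2f1 a b (a+b) z = integral {0..1} (\<lambda>t. wB a b t * (1 - z*t) powr (-a)) / Beta b a"
proof -
  define c where "c n = pochhammer a n / fact n" for n
  define hc where "hc n = pochhammer a n * pochhammer b n / (pochhammer (a+b) n * fact n)" for n
  define f where "f k t = (\<Sum>n<k. wB a b t * (c n * (z*t)^n))" for k t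
  define g where "g t = wB a b t * (1 - z*t) powr (-a)" for t
  have cnn: "c n \<ge> 0" for n using a unfolding c_def by (simp add: pochhammer_pos less_imp_le)
  have trm: "((\<lambda>t. wB a b t * (c n * (z*t)^n)) has_integral (c n * z^n * Beta (b + real n) a)) {0..1}" for n
  proof -
    have "((\<lambda>t. (c n * z^n) * (t powr (b + real n - 1) * (1 - t) powr (a - 1))) has_integral (c n * z^n) * Beta (b + real n) a) {0..1}"
      using has_integral_Beta_real[of "b + real n" a] a b by (intro has_integral_mult_right) auto
    moreover have "(c n * z^n) * (t powr (b + real n - 1) * (1 - t) powr (a - 1)) = wB a b t * (c n * (z*t)^n)" if "t \<in> {0..1}" for t
    proof (cases "t = 0")
      case True then show ?thesis using b by (simp add: wB_def)
    next
      case False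
      then have "t > 0" using that by auto
      then have "t powr (b + real n - 1) = t powr (b - 1) * t ^ n"
        by (simp add: powr_add powr_realpow[symmetric] diff_add_eq[symmetric] add.commute add_diff_eq[symmetric])
      then show ?thesis unfolding wB_def by (simp add: power_mult_distrib)
    qed
    ultimately show ?thesis by (rule has_integral_eq[rotated])
  qed
  have beta_term: "c n * z^n * Beta (b + real n) a = Beta b a * (hc n * z^n)" for n
    using beta_shift[OF a b, of n] unfolding c_def hc_def by (simp add: mult_ac)
  have fk: "(f k has_integral (Beta b a * (\<Sum>n<k. hc n * z^n))) {0..1}" for k
    unfolding f_def sum_distrib_left beta_term[symmetric] by (intro has_integral_sum) (auto intro: trm)
  have ser: "(\<lambda>n. c n * (z*t)^n) sums (1 - z*t) powr (-a)" if "t \<in> {0..1}" for t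
  proof -
    have "z * t \<le> z" using that z by (intro mult_left_le) auto
    then have "z * t < 1" using z by linarith
    moreover have "0 \<le> z * t" using that z by auto
    ultimately have "\<bar>- (z*t)\<bar> < 1" by auto
    from gen_binomial_real[OF this, of "-a"] show ?thesis
      unfolding c_def gbin_poch by simp
  qed
  have lim: "(\<lambda>k. f k t) \<longlonglongrightarrow> g t" if "t \<in> {0..1}" for t
    using sums_mult[OF ser[OF that], of "wB a b t"] unfolding f_def g_def sums_def .
  have mono: "f k t \<le> f (Suc k) t" if "t \<in> {0..1}" for k t
    unfolding f_def using that z cnn wB_nonneg[of a b t] by simp
  have Bpos: "Beta b a > 0" by (rule Beta_pos[OF b a])
  have bnd: "f k t \<le> wB a b t * (1 - z) powr (-a)" if t: "t \<in> {0..1}" for k t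
  proof -
    have "f k t \<le> g t"
    proof -
      have s: "(\<lambda>n. wB a b t * (c n * (z*t)^n)) sums g t"
        using sums_mult[OF ser[OF t], of "wB a b t"] unfolding g_def .
      have "f k t \<le> suminf (\<lambda>n. wB a b t * (c n * (z*t)^n))"
        unfolding f_def using s t z cnn wB_nonneg[of a b t]
        by (intro sum_le_suminf) (auto simp: sums_iff)
      then show ?thesis using s by (simp add: sums_iff)
    qed
    also have "g t \<le> wB a b t * (1 - z) powr (-a)"
      unfolding g_def using t z a wB_nonneg[of a b t]
      by (intro mult_left_mono powr_mono2') (auto simp: mult_left_le)
    finally show ?thesis .
  qed
  have wint: "(\<lambda>t. wB a b t * (1 - z) powr (-a)) integrable_on {0..1}"
    using has_integral_Beta_real[OF b a] unfolding wB_def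
    by (intro integrable_on_mult_left) (auto simp: has_integral_integrable)
  have "bounded (range (\<lambda>k. integral {0..1} (f k)))"
    unfolding bounded_real
  proof (intro exI ballI)
    fix r assume "r \<in> range (\<lambda>k. integral {0..1} (f k))"
    then obtain k where r: "r = integral {0..1} (f k)" by auto
    have "0 \<le> integral {0..1} (f k)"
      using fk[of k] by (intro integral_nonneg) (auto simp: has_integral_integrable f_def intro!: sum_nonneg mult_nonneg_nonneg wB_nonneg cnn z zero_le_power)
    moreover have "integral {0..1} (f k) \<le> integral {0..1} (\<lambda>t. wB a b t * (1 - z) powr (-a))"
      using fk[of k] wint bnd by (intro integral_le) (auto simp: has_integral_integrable)
    ultimately show "\<bar>r\<bar> \<le> integral {0..1} (\<lambda>t. wB a b t * (1 - z) powr (-a))" using r by simp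
  qed
  from monotone_convergence_increasing[of f "{0..1}" g, OF _ mono lim this]
  have mc: "g integrable_on {0..1}" "(\<lambda>k. integral {0..1} (f k)) \<longlonglongrightarrow> integral {0..1} g"
    using fk by (auto simp: has_integral_integrable)
  then show "(\<lambda>t. wB a b t * (1 - z*t) powr (-a)) integrable_on {0..1}" using mc(1) unfolding g_def by simp
  have "(\<lambda>k. Beta b a * (\<Sum>n<k. hc n * z^n)) \<longlonglongrightarrow> integral {0..1} g"
  proof -
    have "integral {0..1} (f k) = Beta b a * (\<Sum>n<k. hc n * z^n)" for k
      using fk[of k] by (rule integral_unique)
    then show ?thesis using mc(2) by simp
  qed
  from tendsto_divide[OF this tendsto_const[of "Beta b a"]] Bpos
  have "(\<lambda>k. (\<Sum>n<k. hc n * z^n)) \<longlonglongrightarrow> integral {0..1} g / Beta b a" by simp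
  then have "(\<lambda>n. hc n * z^n) sums (integral {0..1} g / Beta b a)" unfolding sums_def .
  then show "hyp2f1 a b (a+b) z = integral {0..1} (\<lambda>t. wB a b t * (1 - z*t) powr (-a)) / Beta b a"
    unfolding hyp2f1_def hc_def g_def by (simp add: sums_iff)
qed

lemma tangent_identity:
  fixes P Q p q m n :: real
  assumes "P > 0" "Q > 0" "p > 0" "q > 0" "m \<ge> 0" "n \<ge> 0" "m + n = 1"
  shows "p*q/(m*q+n*p) + m*n*(Q*p-P*q)^2/((m*Q+n*P)^2*(m*q+n*p))
         = m*Q^2/(m*Q+n*P)^2 * p + n*P^2/(m*Q+n*P)^2 * q"
proof -
  have d1: "m*q+n*p > 0"
    using assms by (cases "m > 0") (auto intro: add_pos_nonneg add_nonneg_pos)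
  have d2: "m*Q+n*P > 0"
    using assms by (cases "m > 0") (auto intro: add_pos_nonneg add_nonneg_pos)
  have key: "p*q*(m*Q+n*P)^2 + m*n*(Q*p-P*q)^2 = (m*Q^2*p + n*P^2*q)*(m*q+n*p)"
    by (simp add: power2_eq_square algebra_simps)
  have "p*q/(m*q+n*p) + m*n*(Q*p-P*q)^2/((m*Q+n*P)^2*(m*q+n*p))
       = (p*q*(m*Q+n*P)^2 + m*n*(Q*p-P*q)^2) / ((m*Q+n*P)^2*(m*q+n*p))"
    using d1 d2 by (simp add: add_divide_distrib)
  also have "\<dots> = (m*Q^2*p + n*P^2*q) / (m*Q+n*P)^2"
    unfolding key using d1 d2 by simp
  also have "\<dots> = m*Q^2/(m*Q+n*P)^2 * p + n*P^2/(m*Q+n*P)^2 * q"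
    by (simp add: add_divide_distrib)
  finally show ?thesis .
qed

lemma pointwise:
  fixes a P Q m n x y t :: real
  assumes a: "0 < a" "a \<le> 1" and PQ: "P > 0" "Q > 0" and mn: "m \<ge> 0" "n \<ge> 0" "m + n = 1"
    and xy: "0 \<le> x" "x < 1" "0 \<le> y" "y < 1" and t: "0 \<le> t" "t \<le> 1"
  shows "(1 - (m*x+n*y)*t) powr (-a)
      + m*n*(Q*(1-x*t) powr (-a) - P*(1-y*t) powr (-a))^2
          /((m*Q+n*P)^2*(m*(1-y*t) powr (-a)+n*(1-x*t) powr (-a)))
     \<le> m*Q^2/(m*Q+n*P)^2 * (1-x*t) powr (-a) + n*P^2/(m*Q+n*P)^2 * (1-y*t) powr (-a)"
proof -
  define u where "u = 1 - x*t"
  define v where "v = 1 - y*t"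
  have "x * t \<le> x" using xy t by (intro mult_left_le) auto
  then have u: "u > 0" unfolding u_def using xy by linarith
  have "y * t \<le> y" using xy t by (intro mult_left_le) auto
  then have v: "v > 0" unfolding v_def using xy by linarith
  have muv: "1 - (m * x + n * y) * t = m * u + n * v" unfolding u_def v_def using mn
    by (simp add: algebra_simps)
  have muv_pos: "m * u + n * v > 0"
    using mn u v by (cases "m > 0") (auto intro: add_pos_nonneg add_nonneg_pos)
  define p where "p = u powr (-a)"
  define q where "q = v powr (-a)"
  have p: "p > 0" "u powr a = 1/p" unfolding p_def using u by (auto simp: powr_minus divide_inverse)
  have q: "q > 0" "v powr a = 1/q" unfolding q_def using v by (auto simp: powr_minus divide_inverse)
  have conc: "m * (1/p) + n * (1/q) \<le> (m * u + n * v) powr a"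
    using powr_concave_ineq[OF a u v mn] p q by simp
  have lhs_pos: "m * (1/p) + n * (1/q) > 0"
    using mn p q by (cases "m > 0") (auto intro: add_pos_nonneg add_nonneg_pos)
  have "(m * u + n * v) powr (-a) = 1 / (m * u + n * v) powr a" by (simp add: powr_minus divide_inverse)
  also have "\<dots> \<le> 1 / (m * (1/p) + n * (1/q))"
    using conc lhs_pos by (intro divide_left_mono) (auto intro!: mult_pos_pos)
  also have "\<dots> = p*q/(m*q+n*p)" using p q by (simp add: field_simps)
  finally have step1: "(m * u + n * v) powr (-a) \<le> p*q/(m*q+n*p)" .
  show ?thesis
    unfolding muv u_def[symmetric] v_def[symmetric] p_def[symmetric] q_def[symmetric]
    using step1 tangent_identity[OF PQ p(1) q(1) mn] by linarith
qed

definition JJ :: "real \<Rightarrow> real \<Rightarrow> real \<Rightarrow> real" where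
  "JJ a b z = integral {0..1} (\<lambda>t. wB a b t * (1 - z*t) powr (-a))"

lemma base_pos: "0 \<le> (x::real) \<Longrightarrow> x < 1 \<Longrightarrow> 0 \<le> t \<Longrightarrow> t \<le> 1 \<Longrightarrow> 0 < 1 - x * t"
proof -
  assume "0 \<le> x" "x < 1" "0 \<le> t" "t \<le> 1"
  then have "x * t \<le> x" by (intro mult_left_le) auto
  then show ?thesis using \<open>x < 1\<close> by linarith
qed

lemma JJ_ge:
  assumes "0 < a" "0 < b" "0 \<le> z" "z < 1"
  shows "Beta b a \<le> JJ a b z"
proof -
  have "integral {0..1} (wB a b) \<le> JJ a b z"
    unfolding JJ_def
  proof (rule integral_le)
    show "wB a b integrable_on {0..1}"
      using has_integral_Beta_real[of b a] assms unfolding wB_def[abs_def]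
      by (auto simp: has_integral_integrable)
    show "(\<lambda>t. wB a b t * (1 - z*t) powr (-a)) integrable_on {0..1}"
      by (rule rep(1)) (use assms in auto)
    fix t :: real assume t: "t \<in> {0..1}"
    have bp: "0 < 1 - z * t" using base_pos[of z t] assms t by auto
    have "1 \<le> (1 - z*t) powr (-a)"
    proof -
      have "1 powr (-a) \<le> (1 - z*t) powr (-a)"
        using bp assms t by (intro powr_mono2') (auto simp: mult_nonneg_nonneg)
      then show ?thesis by simp
    qed
    then show "wB a b t \<le> wB a b t * (1 - z*t) powr (-a)"
      using wB_nonneg[of a b t] by (simp add: mult_le_cancel_left1)
  qed
  moreover have "integral {0..1} (wB a b) = Beta b a"
    using has_integral_Beta_real[of b a] assms unfolding wB_def[abs_def]
    by (auto intro: integral_unique)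
  ultimately show ?thesis by simp
qed

lemma sep:
  fixes x y a P Q :: real
  assumes a: "0 < a" and xy: "0 \<le> x" "x < 1" "0 \<le> y" "y < 1" and PQ: "P > 0" "Q > 0" and ne: "x \<noteq> y"
  shows "Q*(1-x*(1/3)) powr (-a) \<noteq> P*(1-y*(1/3)) powr (-a) \<or>
         Q*(1-x*(2/3)) powr (-a) \<noteq> P*(1-y*(2/3)) powr (-a)"
proof (rule ccontr)
  assume "\<not> ?thesis"
  then have e1: "Q*(1-x*(1/3)) powr (-a) = P*(1-y*(1/3)) powr (-a)"
        and e2: "Q*(1-x*(2/3)) powr (-a) = P*(1-y*(2/3)) powr (-a)" by auto
  define A where "A = (1-x*(1/3)) * (1-y*(2/3))"
  define B where "B = (1-x*(2/3)) * (1-y*(1/3))"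
  have pos: "0 < 1-x*(1/3)" "0 < 1-y*(2/3)" "0 < 1-x*(2/3)" "0 < 1-y*(1/3)"
    using xy by auto
  have "(Q*(1-x*(1/3)) powr (-a)) * (P*(1-y*(2/3)) powr (-a)) = (P*(1-y*(1/3)) powr (-a)) * (Q*(1-x*(2/3)) powr (-a))"
    using e1 e2 by simp
  then have "P*Q*((1-x*(1/3)) powr (-a) * (1-y*(2/3)) powr (-a)) = P*Q*((1-x*(2/3)) powr (-a) * (1-y*(1/3)) powr (-a))"
    by (simp add: algebra_simps)
  then have "(1-x*(1/3)) powr (-a) * (1-y*(2/3)) powr (-a) = (1-x*(2/3)) powr (-a) * (1-y*(1/3)) powr (-a)"
    using PQ by simp
  then have "A powr (-a) = B powr (-a)"
    unfolding A_def B_def using pos by (simp add: powr_mult)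
  then have "(A powr (-a)) powr (-1/a) = (B powr (-a)) powr (-1/a)" by simp
  moreover have "A > 0" "B > 0" unfolding A_def B_def using pos by auto
  ultimately have "A = B" using a by (simp add: powr_powr)
  moreover have "A - B = (x - y) / 3" unfolding A_def B_def by (simp add: field_simps)
  ultimately show False using ne by simp
qed

lemma main:
  fixes a b x y m n :: real
  assumes a: "0 < a" "a \<le> 1" and b: "0 < b"
    and xy: "0 \<le> x" "x < 1" "0 \<le> y" "y < 1" and mn: "0 \<le> m" "0 \<le> n" "m + n = 1"
  shows "m / JJ a b x + n / JJ a b y \<le> 1 / JJ a b (m*x+n*y)"
    and "0 < m \<Longrightarrow> 0 < n \<Longrightarrow> x \<noteq> y \<Longrightarrow> m / JJ a b x + n / JJ a b y < 1 / JJ a b (m*x+n*y)"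
proof -
  define z where "z = m*x+n*y"
  have z: "0 \<le> z" "z < 1" unfolding z_def using xy mn
    by (auto intro!: convex_bound_lt)
  have Bpos: "Beta b a > 0" by (rule Beta_pos[OF b a(1)])
  define P where "P = JJ a b x"
  define Q where "Q = JJ a b y"
  have P: "P > 0" unfolding P_def using JJ_ge[OF a(1) b xy(1,2)] Bpos by linarith
  have Q: "Q > 0" unfolding Q_def using JJ_ge[OF a(1) b xy(3,4)] Bpos by linarith
  have Z: "JJ a b z > 0" using JJ_ge[OF a(1) b z] Bpos by linarith
  define D where "D = m*Q+n*P"
  have D: "D > 0" unfolding D_def
    using mn P Q by (cases "m > 0") (auto intro: add_pos_nonneg add_nonneg_pos)
  define al where "al = m*Q^2/D^2"
  define be where "be = n*P^2/D^2"
  define K where "K w t = (1 - w*t) powr (-a)" for w t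
  define H where "H t = m*n*(Q*K x t - P*K y t)^2/(D^2*(m*K y t+n*K x t))" for t
  define R where "R t = al * (wB a b t * K x t) + be * (wB a b t * K y t)" for t
  define G where "G t = R t - wB a b t * K z t" for t
  have Kpos: "K w t > 0" if "0 \<le> w" "w < 1" "0 \<le> t" "t \<le> 1" for w t
    unfolding K_def using base_pos[OF that] by simp
  have ix: "(\<lambda>t. wB a b t * K x t) integrable_on {0..1}"
    unfolding K_def by (rule rep(1)) (use a b xy in auto)
  have iy: "(\<lambda>t. wB a b t * K y t) integrable_on {0..1}"
    unfolding K_def by (rule rep(1)) (use a b xy in auto)
  have iz: "(\<lambda>t. wB a b t * K z t) integrable_on {0..1}"
    unfolding K_def by (rule rep(1)) (use a b z in auto)
  have iR: "R integrable_on {0..1}" unfolding R_def[abs_def]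
    using ix iy by (intro integrable_add integrable_on_mult_right) auto
  have intR: "integral {0..1} R = al * P + be * Q"
    unfolding R_def[abs_def] P_def Q_def JJ_def K_def
    using ix iy unfolding K_def by (simp add: integral_add integrable_on_mult_right)
  have alg: "al * P + be * Q = P * Q / D"
  proof -
    have "al * P + be * Q = (m*Q^2*P + n*P^2*Q)/D^2" by (simp add: al_def be_def add_divide_distrib)
    also have "m*Q^2*P + n*P^2*Q = P*Q*D" by (simp add: D_def power2_eq_square algebra_simps)
    also have "P*Q*D/D^2 = P*Q/D" using D by (simp add: power2_eq_square)
    finally show ?thesis .
  qed
  have iG: "G integrable_on {0..1}" unfolding G_def[abs_def] using iR iz by (intro integrable_diff)
  have intG: "integral {0..1} G = P*Q/D - JJ a b z"
    unfolding G_def[abs_def] using iR iz intR alg by (simp add: integral_diff JJ_def K_def)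
  have Hnn: "H t \<ge> 0" if "t \<in> {0..1}" for t
    unfolding H_def using mn Kpos[of x t] Kpos[of y t] xy that
    by (intro divide_nonneg_nonneg mult_nonneg_nonneg add_nonneg_nonneg) auto
  have GH: "G t \<ge> wB a b t * H t" if t: "t \<in> {0..1}" for t
  proof -
    have "K z t + H t \<le> al * K x t + be * K y t"
      using pointwise[OF a P Q mn xy, of t] t unfolding K_def H_def al_def be_def D_def z_def by auto
    then have "wB a b t * (K z t + H t) \<le> wB a b t * (al * K x t + be * K y t)"
      using wB_nonneg[of a b t] by (rule mult_left_mono)
    then show ?thesis unfolding G_def R_def by (simp add: algebra_simps)
  qed
  have Gnn: "G t \<ge> 0" if "t \<in> {0..1}" for t
    using GH[OF that] Hnn[OF that] wB_nonneg[of a b t] by (smt (verit) mult_nonneg_nonneg)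
  have "0 \<le> integral {0..1} G" using iG Gnn by (intro integral_nonneg) auto
  then have le: "JJ a b z \<le> P*Q/D" using intG by simp
  have conv: "1 / JJ a b z \<ge> D / (P*Q)" if "JJ a b z \<le> P*Q/D" 
    using that Z P Q D by (simp add: field_simps)
  have rhs: "D / (P*Q) = m / P + n / Q" unfolding D_def using P Q by (simp add: field_simps)
  show "m / JJ a b x + n / JJ a b y \<le> 1 / JJ a b (m*x+n*y)"
    using conv[OF le] rhs unfolding P_def Q_def z_def by simp
  assume m0: "0 < m" and n0: "0 < n" and ne: "x \<noteq> y"
  obtain t0 where t0: "t0 \<in> {1/4..3/4}" "Q*K x t0 \<noteq> P*K y t0"
  proof -
    have "(1/3::real) \<in> {1/4..3/4}" "(2/3::real) \<in> {1/4..3/4}" by auto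
    then show ?thesis using that sep[OF a(1) xy P Q ne] unfolding K_def by blast
  qed
  have wBcont: "continuous_on {1/4..3/4::real} (wB a b)"
    unfolding wB_def[abs_def] by (intro continuous_intros) auto
  have Kcont: "continuous_on {1/4..3/4::real} (K w)" if "0 \<le> w" "w < 1" for w
  proof -
    have "0 < 1 - w * t" if "t \<in> {1/4..3/4::real}" for t
      using base_pos[OF \<open>0 \<le> w\<close> \<open>w < 1\<close>, of t] that by auto
    then have "\<forall>t\<in>{1/4..3/4::real}. 1 - w * t \<noteq> 0" by fastforce
    then show ?thesis unfolding K_def[abs_def] by (intro continuous_intros) auto
  qed
  have hcont: "continuous_on {1/4..3/4::real} (\<lambda>t. wB a b t * H t)"
  proof -
    have den: "\<forall>t\<in>{1/4..3/4::real}. D^2*(m*K y t + n*K x t) \<noteq> 0"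
    proof
      fix t :: real assume t: "t \<in> {1/4..3/4}"
      have "m*K y t + n*K x t > 0"
        using Kpos[of y t] Kpos[of x t] xy t mn by (cases "m > 0") (auto intro: add_pos_nonneg add_nonneg_pos)
      then show "D^2*(m*K y t + n*K x t) \<noteq> 0" using D by simp
    qed
    show ?thesis unfolding H_def
      apply (intro continuous_intros wBcont Kcont den)
      using xy by auto
  qed
  have hnn: "0 \<le> wB a b t * H t" if "t \<in> {1/4..3/4}" for t
    using Hnn[of t] that wB_nonneg[of a b t] by auto
  have ht0: "wB a b t0 * H t0 \<noteq> 0"
  proof -
    have "wB a b t0 > 0" unfolding wB_def using t0 by auto
    moreover have "m*K y t0+n*K x t0 > 0" using Kpos[of y t0] Kpos[of x t0] xy t0 m0 n0 by (auto intro!: add_pos_pos)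
    moreover have "(Q*K x t0 - P*K y t0)^2 > 0" using t0 by auto
    ultimately show ?thesis unfolding H_def using m0 n0 D by auto
  qed
  have "integral {1/4..3/4} (\<lambda>t. wB a b t * H t) \<noteq> 0"
    using integral_eq_0_iff[OF hcont _ hnn] ht0 t0 by auto
  moreover have "integral {1/4..3/4} (\<lambda>t. wB a b t * H t) \<ge> 0"
    using hnn hcont by (intro integral_nonneg integrable_continuous_interval) auto
  ultimately have pos1: "integral {1/4..3/4} (\<lambda>t. wB a b t * H t) > 0" by linarith
  have iG2: "G integrable_on {1/4..3/4}"
    by (rule integrable_on_subinterval[OF iG]) auto
  have "integral {1/4..3/4} (\<lambda>t. wB a b t * H t) \<le> integral {1/4..3/4} G"
  proof (rule integral_le)
    show "(\<lambda>t. wB a b t * H t) integrable_on {1/4..3/4}"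
      using hcont by (rule integrable_continuous_interval)
  qed (use GH iG2 in auto)
  also have "\<dots> \<le> integral {0..1} G"
    using iG iG2 Gnn by (intro integral_subset_le) auto
  finally have "JJ a b z < P*Q/D" using pos1 intG by simp
  then have "1 / JJ a b z > D / (P*Q)"
    using Z P Q D by (simp add: field_simps)
  then show "m / JJ a b x + n / JJ a b y < 1 / JJ a b (m*x+n*y)"
    using rhs unfolding P_def Q_def z_def by simp
qed

lemma hm_eq: "B > 0 \<Longrightarrow> X > 0 \<Longrightarrow> Y > 0 \<Longrightarrow>
  2*(X/B)*(Y/B)/(X/B+Y/B) = 1 / (B * ((1/2)/X + (1/2)/Y))"
  for B X Y :: real by (simp add: field_simps)

lemma hm_le: "B > 0 \<Longrightarrow> X > 0 \<Longrightarrow> Y > 0 \<Longrightarrow> M > 0 \<Longrightarrow> (1/2)/X + (1/2)/Y \<le> 1/M \<Longrightarrow>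
  M/B \<le> 2*(X/B)*(Y/B)/(X/B+Y/B)"
  for B X Y M :: real
proof -
  assume h: "B > 0" "X > 0" "Y > 0" "M > 0" "(1/2)/X + (1/2)/Y \<le> 1/M"
  have s: "(1/2)/X + (1/2)/Y > 0" using h by (intro add_pos_pos divide_pos_pos) auto
  have "M \<le> 1 / ((1/2)/X + (1/2)/Y)" using h s by (simp add: field_simps)
  then have "M/B \<le> 1 / ((1/2)/X + (1/2)/Y) / B" using h(1) by (intro divide_right_mono) auto
  moreover have "1 / ((1/2)/X + (1/2)/Y) / B = 1 / (B * ((1/2)/X + (1/2)/Y))" by simp
  ultimately show ?thesis using hm_eq[OF h(1-3)] by metis
qed

lemma hm_less: "B > 0 \<Longrightarrow> X > 0 \<Longrightarrow> Y > 0 \<Longrightarrow> M > 0 \<Longrightarrow> (1/2)/X + (1/2)/Y < 1/M \<Longrightarrow>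
  M/B < 2*(X/B)*(Y/B)/(X/B+Y/B)"
  for B X Y M :: real
proof -
  assume h: "B > 0" "X > 0" "Y > 0" "M > 0" "(1/2)/X + (1/2)/Y < 1/M"
  have s: "(1/2)/X + (1/2)/Y > 0" using h by (intro add_pos_pos divide_pos_pos) auto
  have "M < 1 / ((1/2)/X + (1/2)/Y)" using h s by (simp add: field_simps)
  then have "M/B < 1 / ((1/2)/X + (1/2)/Y) / B" using h(1) by (intro divide_strict_right_mono) auto
  moreover have "1 / ((1/2)/X + (1/2)/Y) / B = 1 / (B * ((1/2)/X + (1/2)/Y))" by simp
  ultimately show ?thesis using hm_eq[OF h(1-3)] by metis
qed

theorem theorem3p5:
  fixes a b :: real
  assumes "0 < a" "a \<le> 1" "0 < b" "b \<le> 1"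
  shows "concave_on {0<..<1} (\<lambda>x. 1 / hyp2f1 a b (a + b) x) \<and>
    (\<forall>x\<in>{0<..<1}. \<forall>y\<in>{0<..<1}.
           hyp2f1 a b (a + b) ((x + y) / 2)
             \<le> 2 * hyp2f1 a b (a + b) x * hyp2f1 a b (a + b) y
                 / (hyp2f1 a b (a + b) x + hyp2f1 a b (a + b) y)
         \<and> (hyp2f1 a b (a + b) ((x + y) / 2)
             = 2 * hyp2f1 a b (a + b) x * hyp2f1 a b (a + b) y
                 / (hyp2f1 a b (a + b) x + hyp2f1 a b (a + b) y) \<longleftrightarrow> x = y))"
proof -
  have a: "0 < a" "a \<le> 1" and b: "0 < b" using assms by auto
  define B where "B = Beta b a"
  have Bpos: "B > 0" unfolding B_def by (rule Beta_pos[OF b a(1)])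
  have F: "hyp2f1 a b (a+b) z = JJ a b z / B" if "0 \<le> z" "z < 1" for z
    using rep(2)[OF a(1) b that] unfolding JJ_def B_def by simp
  have Jpos: "JJ a b z > 0" if "0 \<le> z" "z < 1" for z
    using JJ_ge[OF a(1) b that] Bpos unfolding B_def by linarith
  have part1: "concave_on {0<..<1} (\<lambda>x. 1 / hyp2f1 a b (a + b) x)"
    unfolding concave_on_iff
  proof (intro conjI ballI allI impI)
    show "convex {0<..<1::real}" by (rule convex_real_interval)
    fix x y u v :: real
    assume x: "x \<in> {0<..<1}" and y: "y \<in> {0<..<1}" and uv: "0 \<le> u" "0 \<le> v" "u + v = 1"
    have zz: "0 \<le> u * x + v * y" "u * x + v * y < 1" using x y uv by (auto intro!: convex_bound_lt)
    have m: "u / JJ a b x + v / JJ a b y \<le> 1 / JJ a b (u * x + v * y)"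
      by (rule main(1)[OF a b _ _ _ _ uv]) (use x y in auto)
    have "u * (1 / hyp2f1 a b (a + b) x) + v * (1 / hyp2f1 a b (a + b) y) = B * (u / JJ a b x + v / JJ a b y)"
      using F[of x] F[of y] x y by (simp add: algebra_simps)
    also have "\<dots> \<le> B * (1 / JJ a b (u * x + v * y))" using mult_left_mono[OF m less_imp_le[OF Bpos]] .
    also have "\<dots> = 1 / hyp2f1 a b (a + b) (u *\<^sub>R x + v *\<^sub>R y)"
      using F[OF zz] by simp
    finally show "u * (1 / hyp2f1 a b (a + b) x) + v * (1 / hyp2f1 a b (a + b) y)
       \<le> 1 / hyp2f1 a b (a + b) (u *\<^sub>R x + v *\<^sub>R y)" .
  qed
  have part2: "hyp2f1 a b (a + b) ((x + y) / 2)
             \<le> 2 * hyp2f1 a b (a + b) x * hyp2f1 a b (a + b) y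
                 / (hyp2f1 a b (a + b) x + hyp2f1 a b (a + b) y)
         \<and> (hyp2f1 a b (a + b) ((x + y) / 2)
             = 2 * hyp2f1 a b (a + b) x * hyp2f1 a b (a + b) y
                 / (hyp2f1 a b (a + b) x + hyp2f1 a b (a + b) y) \<longleftrightarrow> x = y)"
    if x: "x \<in> {0<..<1}" and y: "y \<in> {0<..<1}" for x y
  proof -
    have mid: "(x + y) / 2 = (1/2)*x + (1/2)*y" by simp
    have mz: "0 \<le> (x + y) / 2" "(x + y) / 2 < 1" using x y by auto
    have Fx: "hyp2f1 a b (a+b) x = JJ a b x / B" using F x by auto
    have Fy: "hyp2f1 a b (a+b) y = JJ a b y / B" using F y by auto
    have Fm: "hyp2f1 a b (a+b) ((x+y)/2) = JJ a b ((1/2)*x + (1/2)*y) / B"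
      using F[OF mz] mid by (simp only:)
    have X: "JJ a b x > 0" "JJ a b y > 0" "JJ a b ((1/2)*x + (1/2)*y) > 0"
      using Jpos x y mz mid by auto
    have le: "(1/2) / JJ a b x + (1/2) / JJ a b y \<le> 1 / JJ a b ((1/2)*x + (1/2)*y)"
      by (rule main(1)[OF a b]) (use x y in auto)
    have L: "hyp2f1 a b (a + b) ((x + y) / 2)
             \<le> 2 * hyp2f1 a b (a + b) x * hyp2f1 a b (a + b) y
                 / (hyp2f1 a b (a + b) x + hyp2f1 a b (a + b) y)"
      unfolding Fx Fy Fm using hm_le[OF Bpos X le] by simp
    have E: "hyp2f1 a b (a + b) ((x + y) / 2)
             = 2 * hyp2f1 a b (a + b) x * hyp2f1 a b (a + b) y
                 / (hyp2f1 a b (a + b) x + hyp2f1 a b (a + b) y) \<longleftrightarrow> x = y"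
    proof
      assume "x = y"
      then show "hyp2f1 a b (a + b) ((x + y) / 2)
             = 2 * hyp2f1 a b (a + b) x * hyp2f1 a b (a + b) y
                 / (hyp2f1 a b (a + b) x + hyp2f1 a b (a + b) y)"
        using Fx X Bpos by (simp add: field_simps)
    next
      assume eq: "hyp2f1 a b (a + b) ((x + y) / 2)
             = 2 * hyp2f1 a b (a + b) x * hyp2f1 a b (a + b) y
                 / (hyp2f1 a b (a + b) x + hyp2f1 a b (a + b) y)"
      show "x = y"
      proof (rule ccontr)
        assume ne: "x \<noteq> y"
        have "(1/2) / JJ a b x + (1/2) / JJ a b y < 1 / JJ a b ((1/2)*x + (1/2)*y)"
          by (rule main(2)[OF a b]) (use x y ne in auto)
        from hm_less[OF Bpos X this] eq show False unfolding Fx Fy Fm by simp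
      qed
    qed
    show ?thesis using L E by blast
  qed
  show ?thesis using part1 part2 by blast
qed

end
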